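(* With $\overline F_1$, $p$, $\beta$ as in the context, let $h:\overline F_1\to\overline F_1$ be the left $\mathrm{As}$-module map of degree $-1$ defined on free generators by $(\mathsf f_{i_1}\otimes\dots\otimes\mathsf f_{i_{k-1}}\otimes\mathsf f_{1})m^{(k)}.h=(\mathsf f_{i_1}\otimes\dots\otimes\mathsf f_{i_{k-2}}\otimes\mathsf f_{i_{k-1}+1})m^{(k-1)}$ if $k>1$, and $h=0$ on all other generators (those with $k=1$ or with last index $i_k\neq1$). Let $N=1-p\beta+h\partial+\partial h$ (diagrammatic composition). Then $N$ is a left $\mathrm{As}$-module map with $\mathsf f_n.N=0$ for all $n\ge1$, and for $k>1$: (i) $(\mathsf f_{i_1}\otimes\dots\otimes\mathsf f_{i_k})m^{(k)}.N=0$ if $i_k>2$; (ii) $(\mathsf f_{i_1}\otimes\dots\otimes\mathsf f_{i_{k-1}}\otimes\mathsf f_2)m^{(k)}.N=(1^{\otimes(i_1+\dots+i_{k-1})}\otimes m)(\mathsf f_{i_1}\otimes\dots\otimes\mathsf f_{i_{k-2}}\otimes\mathsf f_{i_{k-1}+1})m^{(k-1)}$; (iii) $(\mathsf f_{i_1}\otimes\dots\otimes\mathsf f_{i_{k-1}}\otimes\mathsf f_1)m^{(k)}.N=(1^{\otimes(i_1+\dots+i_{k-1}-1)}\otimes m)(\mathsf f_{i_1}\otimes\dots\otimes\mathsf f_{i_{k-1}})m^{(k-1)}$ if $i_{k-1}>1$; (iv) $(\mathsf f_{i_1}\otimes\dots\otimes\mathsf f_{i_{k-2}}\otimes\mathsf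 f_1\otimes\mathsf f_1)m^{(k)}.N=(1^{\otimes(i_1+\dots+i_{k-2})}\otimes m)(\mathsf f_{i_1}\otimes\dots\otimes\mathsf f_{i_{k-2}}\otimes\mathsf f_1)m^{(k-1)}$ if $(i_1,\dots,i_{k-2})\neq(1,\dots,1)$; (v) $\mathsf f_1^{\otimes k}m^{(k)}.N=(1^{\otimes(k-2)}\otimes m)\mathsf f_1^{\otimes(k-1)}m^{(k-1)}-m^{(k)}\mathsf f_1$. Consequently, if $\overline F_1^{(q)}$ denotes the left $\mathrm{As}$-submodule generated by the $(\mathsf f_{i_1}\otimes\dots\otimes\mathsf f_{i_k})m^{(k)}$ with $k\le q$ ($\overline F_1^{(0)}=0$), then $\overline F_1^{(q)}.N\subset\overline F_1^{(q-1)}$.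
   Context: $\Bbbk$ a commutative ring; Koszul signs; maps are applied on the right ($x.f$) and composed in diagrammatic order. $\mathrm{As}$ is the dg-operad with $\mathrm{As}(0)=0$, $\mathrm{As}(n)=\Bbbk m^{(n)}$ ($n\ge1$, degree 0), $m^{(1)}=1$ the unit, $m=m^{(2)}$, $(m^{(n_1)}\otimes\dots\otimes m^{(n_k)})m^{(k)}=m^{(n_1+\dots+n_k)}$. Left action of operad elements on a bimodule element $x$ of arity $k$ is written $(a_1\otimes\dots\otimes a_k)x$, right action $(x_1\otimes\dots\otimes x_k)b$. $\overline F_1=\mathrm{As}\odot\Bbbk\{\mathsf f_n\mid n\ge1\}\odot\mathrm{As}$ is the free $\mathrm{As}$-bimodule on $\mathsf f_n$ (arity $n$, degree $1-n$) with differential $\mathsf f_k\partial=\sum_{r+2+t=k}(-1)^t(1^{\otimes r}\otimes m\otimes1^{\otimes t})\mathsf f_{k-1}+\sum_{i+j=k,\ i,j\ge1}(-1)^j(\mathsf f_i\otimes\mathsf f_j)m$; as a left $\mathrm{As}$-module it is free on the elements $(\mathsf f_{i_1}\otimes\dots\otimes\mathsf f_{i_k})m^{(k)}$, $k\ge1$. $p:\overline F_1\to\mathrm{As}$ is the bimodule map with $\mathsf f_1\mapsto m^{(1)}$, $\mathsf f_n\mapsto0$ ($n\ge2$), so $(\mathsf f_{i_1}\otimes\dots\otimes\mathsf f_{i_k})m^{(k)}.p=m^{(k)}$ if all $i_s=1$ and $0$ otherwise; $\beta:\mathrm{As}\to\overline F_1$ is the left $\mathrm{As}$-module map $m^{(1)}\mapsto\mathsf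 f_1$. *)

theory Defs
  imports Main "HOL-Library.Poly_Mapping"
begin

text \<open>
Concrete model of the free As-bimodule F1 = As (.) k{f_n} (.) As.
As a left As-module it is free on the generators (f_i1 (x) ... (x) f_ik) m^(k);
since As(n) = k m^(n), a k-basis of F1 consists of the elements
  (m^(n_1) (x) ... (x) m^(n_I)) (f_i1 (x) ... (x) f_ik) m^(k),
I = i_1 + ... + i_k, encoded as the pair (ns, is) with ns = [n_1,...,n_I],
is = [i_1,...,i_k].  Elements of F1 are finitely supported k-valued functions
on such pairs; elements of As are finitely supported functions on arities
(As(n) = k m^(n)).
\<close>

type_synonym fbasis = "nat list \<times> nat list"
type_synonym 'k F1 = "fbasis \<Rightarrow>\<^sub>0 'k"
type_synonym 'k As = "nat \<Rightarrow>\<^sub>0 'k"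

definition valid_basis :: "fbasis \<Rightarrow> bool" where
  "valid_basis b = (snd b \<noteq> [] \<and> (\<forall>i\<in>set (snd b). 1 \<le> i) \<and> (\<forall>n\<in>set (fst b). 1 \<le> n)
     \<and> length (fst b) = sum_list (snd b))"

definition in_F1 :: "('k::zero) F1 \<Rightarrow> bool" where
  "in_F1 x = (Poly_Mapping.keys x \<subseteq> {b. valid_basis b})"

definition arity :: "fbasis \<Rightarrow> nat" where
  "arity b = sum_list (fst b)"

definition smult :: "'k::comm_ring_1 \<Rightarrow> ('b \<Rightarrow>\<^sub>0 'k) \<Rightarrow> ('b \<Rightarrow>\<^sub>0 'k)" where
  "smult c x = Poly_Mapping.map ((*) c) x"

definition lin_ext :: "('b \<Rightarrow> ('c \<Rightarrow>\<^sub>0 'k::comm_ring_1)) \<Rightarrow> ('b \<Rightarrow>\<^sub>0 'k) \<Rightarrow> ('c \<Rightarrow>\<^sub>0 'k)" where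
  "lin_ext T x = (\<Sum>b\<in>Poly_Mapping.keys x. smult (Poly_Mapping.lookup x b) (T b))"

definition bv :: "'b \<Rightarrow> ('b \<Rightarrow>\<^sub>0 'k::comm_ring_1)" where
  "bv b = Poly_Mapping.single b 1"

definition gen :: "nat list \<Rightarrow> 'k::comm_ring_1 F1" where
  "gen is = bv (replicate (sum_list is) 1, is)"

text \<open>Left action of (m^(l_1) (x) ... (x) m^(l_n)) on the arity-n part:
 (m^(l)...)(m^(n_1) (x)...(x) m^(n_I)) g = (m^(sum of l over block 1) (x) ...) g\<close>
fun block_sums :: "nat list \<Rightarrow> nat list \<Rightarrow> nat list" where
  "block_sums ls [] = []"
| "block_sums ls (n # ns) = sum_list (take n ls) # block_sums (drop n ls) ns"

definition lact :: "nat list \<Rightarrow> 'k::comm_ring_1 F1 \<Rightarrow> 'k F1" where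
  "lact ls x = lin_ext (\<lambda>b. if arity b = length ls then bv (block_sums ls (fst b), snd b) else 0) x"

text \<open>merging positions p and p+1 of the left operad labels (effect of (1..m..1) acting)\<close>
definition merge_at :: "nat \<Rightarrow> nat list \<Rightarrow> nat list" where
  "merge_at p ns = take p ns @ [ns ! p + ns ! Suc p] @ drop (Suc (Suc p)) ns"

text \<open>As has zero differential and degree-0
 elements, so the left action commutes with d; on the right-action part d acts
 as a derivation with Koszul sign (maps applied on the right):
 (x_1 (x) ... (x) x_k).(1^{j} (x) d (x) 1^{k-j-1}) = (-1)^{|x_{j+1}|+...+|x_k|}(...x_j d...),
 and |f_i| = 1 - i, whose parity is that of i - 1.  The term (1^r (x) m (x) 1^t) f_{i-1}
 of f_i d (sign (-1)^t) merges two left labels; the term (f_a (x) f_b) m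
 (sign (-1)^b) splits the index i into a, b.\<close>
definition dbasis :: "fbasis \<Rightarrow> 'k::comm_ring_1 F1" where
  "dbasis b = (let ns = fst b; is = snd b in
     (\<Sum>j<length is. smult ((- 1) ^ sum_list (map (\<lambda>i. i - 1) (drop (Suc j) is)))
        ((\<Sum>r<is ! j - 1. smult ((- 1) ^ (is ! j - 2 - r))
              (bv (merge_at (sum_list (take j is) + r) ns, is[j := is ! j - 1])))
       + (\<Sum>a\<in>{1..<is ! j}. smult ((- 1) ^ (is ! j - a))
              (bv (ns, take j is @ [a, is ! j - a] @ drop (Suc j) is))))))"

definition dF :: "'k::comm_ring_1 F1 \<Rightarrow> 'k F1" where
  "dF x = lin_ext dbasis x"

text \<open>p : F1 -> As, bimodule map with f_1 |-> m^(1), f_n |-> 0 (n >= 2)\<close>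
definition pbasis :: "fbasis \<Rightarrow> 'k::comm_ring_1 As" where
  "pbasis b = (if (\<forall>i\<in>set (snd b). i = 1) then bv (sum_list (fst b)) else 0)"

definition pF :: "'k::comm_ring_1 F1 \<Rightarrow> 'k As" where
  "pF x = lin_ext pbasis x"

text \<open>beta : As -> F1, left module map with m^(1) |-> f_1, hence m^(n) |-> (m^(n)) f_1\<close>
definition betaF :: "'k::comm_ring_1 As \<Rightarrow> 'k F1" where
  "betaF a = lin_ext (\<lambda>n. bv ([n], [1])) a"

definition hbasis :: "fbasis \<Rightarrow> 'k::comm_ring_1 F1" where
  "hbasis b = (if 1 < length (snd b) \<and> last (snd b) = 1
      then bv (fst b, butlast (butlast (snd b)) @ [last (butlast (snd b)) + 1]) else 0)"

definition hF :: "'k::comm_ring_1 F1 \<Rightarrow> 'k F1" where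
  "hF x = lin_ext hbasis x"

definition NF :: "'k::comm_ring_1 F1 \<Rightarrow> 'k F1" where
  "NF x = x - betaF (pF x) + dF (hF x) + hF (dF x)"

text \<open>F1^(q): the left As-submodule generated by the generators with k <= q,
 i.e. the k-span of the basis elements (ns, is) with length is <= q.\<close>
definition F1_filt :: "nat \<Rightarrow> ('k::comm_ring_1) F1 set" where
  "F1_filt q = {x. \<forall>b\<in>Poly_Mapping.keys x. valid_basis b \<and> length (snd b) \<le> q}"

end

theory Submission
  imports Defs
begin


lemma lookup_smult [simp]: "Poly_Mapping.lookup (smult c x) k = c * Poly_Mapping.lookup x k"
  unfolding smult_def by transfer (simp add: when_def)

lemma smult_add: "smult c (x + y) = smult c x + smult c y"
  by (rule poly_mapping_eqI) (simp add: lookup_add algebra_simps)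
lemma smult_zero [simp]: "smult c 0 = 0"
  by (rule poly_mapping_eqI) simp
lemma smult_0 [simp]: "smult 0 x = 0"
  by (rule poly_mapping_eqI) simp
lemma smult_1 [simp]: "smult 1 x = x"
  by (rule poly_mapping_eqI) simp
lemma smult_smult [simp]: "smult c (smult d x) = smult (c*d) x"
  by (rule poly_mapping_eqI) (simp add: algebra_simps)
lemma smult_neg1 [simp]: "smult (-1) x = - x"
  by (rule poly_mapping_eqI) simp
lemma smult_uminus: "smult c (- x) = - smult c x"
  by (rule poly_mapping_eqI) simp
lemma smult_minus_left: "smult (- c) x = - smult c x"
  by (rule poly_mapping_eqI) simp
lemma smult_diff: "smult c (x - y) = smult c x - smult c y"
  by (rule poly_mapping_eqI) (simp add: lookup_minus algebra_simps)
lemma smult_sum: "smult c (sum f A) = (\<Sum>a\<in>A. smult c (f a))"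
  by (induction A rule: infinite_finite_induct) (simp_all add: smult_add)
lemma keys_smult: "Poly_Mapping.keys (smult c x) \<subseteq> Poly_Mapping.keys x"
  by (auto simp: in_keys_iff)

lemma lin_ext_superset:
  assumes "finite S" "Poly_Mapping.keys x \<subseteq> S"
  shows "lin_ext T x = (\<Sum>b\<in>S. smult (Poly_Mapping.lookup x b) (T b))"
  unfolding lin_ext_def
  by (rule sum.mono_neutral_left) (use assms in \<open>auto simp: in_keys_iff\<close>)

lemma lin_ext_add: "lin_ext T (x + y) = lin_ext T x + lin_ext T y"
proof -
  let ?S = "Poly_Mapping.keys x \<union> Poly_Mapping.keys y"
  have "lin_ext T (x + y) = (\<Sum>b\<in>?S. smult (Poly_Mapping.lookup (x+y) b) (T b))"
    by (rule lin_ext_superset) (auto dest: subsetD[OF keys_add])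
  also have "\<dots> = (\<Sum>b\<in>?S. smult (Poly_Mapping.lookup x b) (T b)) + (\<Sum>b\<in>?S. smult (Poly_Mapping.lookup y b) (T b))"
    unfolding sum.distrib[symmetric]
    by (rule sum.cong) (auto intro!: poly_mapping_eqI simp: lookup_add algebra_simps)
  also have "\<dots> = lin_ext T x + lin_ext T y"
    by (subst (1 2) lin_ext_superset[where S = ?S]) auto
  finally show ?thesis .
qed

lemma lin_ext_smult: "lin_ext T (smult c x) = smult c (lin_ext T x)"
proof -
  have "lin_ext T (smult c x) = (\<Sum>b\<in>Poly_Mapping.keys x. smult (Poly_Mapping.lookup (smult c x) b) (T b))"
    by (rule lin_ext_superset) (auto simp: keys_smult[THEN subsetD])
  also have "\<dots> = smult c (lin_ext T x)"
    unfolding lin_ext_def smult_sum by simp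
  finally show ?thesis .
qed

lemma lin_ext_zero [simp]: "lin_ext T 0 = 0"
  by (simp add: lin_ext_def)

lemma lin_ext_uminus: "lin_ext T (- x) = - lin_ext T x"
  using lin_ext_smult[of T "-1" x] by simp

lemma lin_ext_diff: "lin_ext T (x - y) = lin_ext T x - lin_ext T y"
  using lin_ext_add[of T x "-y"] by (simp add: lin_ext_uminus)

lemma lin_ext_sum: "lin_ext T (sum f A) = (\<Sum>a\<in>A. lin_ext T (f a))"
  by (induction A rule: infinite_finite_induct) (simp_all add: lin_ext_add)

lemma lin_ext_bv [simp]: "lin_ext T (bv b) = T b"
  by (simp add: lin_ext_def bv_def)

lemma expand_bv: "x = (\<Sum>b\<in>Poly_Mapping.keys x. smult (Poly_Mapping.lookup x b) (bv b))"
proof (rule poly_mapping_eqI)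
  fix k
  have "(\<Sum>b\<in>Poly_Mapping.keys x. Poly_Mapping.lookup x b * (if b = k then 1 else 0))
      = (\<Sum>b\<in>Poly_Mapping.keys x. if b = k then Poly_Mapping.lookup x k else 0)"
    by (rule sum.cong) auto
  also have "\<dots> = Poly_Mapping.lookup x k"
    by (simp add: in_keys_iff)
  finally show "Poly_Mapping.lookup x k = Poly_Mapping.lookup (\<Sum>b\<in>Poly_Mapping.keys x. smult (Poly_Mapping.lookup x b) (bv b)) k"
    by (simp add: lookup_sum bv_def lookup_single when_def)
qed

lemma hF_add: "hF (x + y) = hF x + hF y" by (simp add: hF_def lin_ext_add)
lemma hF_sum: "hF (sum f A) = (\<Sum>a\<in>A. hF (f a))" by (simp add: hF_def lin_ext_sum)
lemma hF_smult: "hF (smult c x) = smult c (hF x)" by (simp add: hF_def lin_ext_smult)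
lemma hF_bv [simp]: "hF (bv b) = hbasis b" by (simp add: hF_def)
lemma hF_zero [simp]: "hF 0 = 0" by (simp add: hF_def)
lemma dF_bv [simp]: "dF (bv b) = dbasis b" by (simp add: dF_def)
lemma dF_zero [simp]: "dF 0 = 0" by (simp add: dF_def)
lemma pF_bv [simp]: "pF (bv b) = pbasis b" by (simp add: pF_def)
lemma betaF_bv [simp]: "betaF (bv n) = bv ([n], [1])" by (simp add: betaF_def)
lemma betaF_zero [simp]: "betaF 0 = 0" by (simp add: betaF_def)

definition sg :: "nat list \<Rightarrow> nat \<Rightarrow> 'k::comm_ring_1" where
  "sg is j = (-1) ^ sum_list (map (\<lambda>i. i - 1) (drop (Suc j) is))"
definition MT :: "nat list \<Rightarrow> nat list \<Rightarrow> nat \<Rightarrow> nat \<Rightarrow> 'k::comm_ring_1 F1" where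
  "MT ns is j r = smult ((- 1) ^ (is ! j - 2 - r))
              (bv (merge_at (sum_list (take j is) + r) ns, is[j := is ! j - 1]))"
definition ST :: "nat list \<Rightarrow> nat list \<Rightarrow> nat \<Rightarrow> nat \<Rightarrow> 'k::comm_ring_1 F1" where
  "ST ns is j a = smult ((- 1) ^ (is ! j - a))
              (bv (ns, take j is @ [a, is ! j - a] @ drop (Suc j) is))"
definition DT :: "nat list \<Rightarrow> nat list \<Rightarrow> nat \<Rightarrow> 'k::comm_ring_1 F1" where
  "DT ns is j = smult (sg is j) ((\<Sum>r<is ! j - 1. MT ns is j r) + (\<Sum>a\<in>{1..<is ! j}. ST ns is j a))"

lemma dbasis_eq: "dbasis (ns, is) = (\<Sum>j<length is. DT ns is j)"
  by (simp add: dbasis_def DT_def MT_def ST_def sg_def Let_def)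

lemma hF_DT: "hF (DT ns is j) = smult (sg is j)
   ((\<Sum>r<is ! j - 1. smult ((- 1) ^ (is ! j - 2 - r))
              (hbasis (merge_at (sum_list (take j is) + r) ns, is[j := is ! j - 1])))
  + (\<Sum>a\<in>{1..<is ! j}. smult ((- 1) ^ (is ! j - a))
              (hbasis (ns, take j is @ [a, is ! j - a] @ drop (Suc j) is))))"
  by (simp add: DT_def MT_def ST_def hF_add hF_sum hF_smult)

lemma hbasis_app2: "hbasis (ns, L @ [a, b]) = (if b = 1 then bv (ns, L @ [a + 1]) else 0)"
  by (simp add: hbasis_def butlast_append)

lemma hbasis_notlast: "last is \<noteq> 1 \<Longrightarrow> hbasis (ns, is) = 0"
  by (simp add: hbasis_def)

lemma sum_alt_merge:
  "(\<Sum>r<Suc n. smult ((-1::'k::comm_ring_1) ^ (n - r)) (f r)) + (\<Sum>r<n. smult ((-1) ^ (n - 1 - r)) (f r)) = f n"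
proof -
  have "(\<Sum>r<n. smult ((-1::'k) ^ (n - r)) (f r)) + (\<Sum>r<n. smult ((-1) ^ (n - 1 - r)) (f r)) = 0"
  proof -
    have "\<And>r. r < n \<Longrightarrow> smult ((-1::'k) ^ (n - r)) (f r) = - smult ((-1) ^ (n - 1 - r)) (f r)"
    proof -
      fix r assume "r < n"
      then have "n - r = Suc (n - 1 - r)" by arith
      then show "smult ((-1::'k) ^ (n - r)) (f r) = - smult ((-1) ^ (n - 1 - r)) (f r)"
        by (simp add: smult_minus_left)
    qed
    then have "(\<Sum>r<n. smult ((-1::'k) ^ (n - r)) (f r)) = (\<Sum>r<n. - smult ((-1) ^ (n - 1 - r)) (f r))"
      by (intro sum.cong) auto
    then show ?thesis by (simp add: sum_negf)
  qed
  then show ?thesis by (simp add: algebra_simps)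
qed

lemma sum_alt_split:
  assumes "1 \<le> m"
  shows "(\<Sum>x\<in>{1..<Suc m}. smult ((-1::'k::comm_ring_1) ^ (Suc m - x)) (P x)) + (\<Sum>x\<in>{1..<m}. smult ((-1) ^ (m - x)) (P x)) = - P m"
proof -
  have "\<And>x. x \<in> {1..<m} \<Longrightarrow> smult ((-1::'k) ^ (Suc m - x)) (P x) = - smult ((-1) ^ (m - x)) (P x)"
  proof -
    fix x assume "x \<in> {1..<m}"
    then have "Suc m - x = Suc (m - x)" by auto
    then show "smult ((-1::'k) ^ (Suc m - x)) (P x) = - smult ((-1) ^ (m - x)) (P x)"
      by (simp add: smult_minus_left)
  qed
  then have "(\<Sum>x\<in>{1..<m}. smult ((-1::'k) ^ (Suc m - x)) (P x)) = (\<Sum>x\<in>{1..<m}. - smult ((-1) ^ (m - x)) (P x))"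
    by (intro sum.cong) auto
  moreover have "{1..<Suc m} = insert m {1..<m}" using assms by auto
  ultimately show ?thesis by (simp add: sum_negf smult_minus_left)
qed

lemma NF_caseA:
  assumes c: "2 \<le> c"
  shows "NF (bv (ns, js @ [c]) :: 'k::comm_ring_1 F1) =
    (if c = 2 \<and> js \<noteq> [] then bv (merge_at (sum_list js) ns, butlast js @ [last js + 1]) else 0)"
proof -
  let ?is = "js @ [c]"
  have h0: "hbasis (ns, ?is) = (0::'k F1)" using c by (simp add: hbasis_notlast)
  have p0: "pbasis (ns, ?is) = (0::'k As)" using c by (simp add: pbasis_def)
  have z: "hF (DT ns ?is j) = (0::'k F1)" if j: "j < length js" for j
  proof -
    have "hbasis (merge_at (sum_list (take j ?is) + r) ns, ?is[j := ?is ! j - 1]) = (0::'k F1)" for r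
      using j c by (intro hbasis_notlast) (simp add: list_update_append1)
    moreover have "hbasis (ns, take j ?is @ [a, ?is ! j - a] @ drop (Suc j) ?is) = (0::'k F1)" for a
      using j c by (intro hbasis_notlast) simp
    ultimately show ?thesis by (simp add: hF_DT)
  qed
  define R :: "'k F1" where "R = (if c = 2 \<and> js \<noteq> [] then bv (merge_at (sum_list js) ns, butlast js @ [last js + 1]) else 0)"
  have last: "hF (DT ns ?is (length js)) = R - bv (ns, ?is)"
  proof -
    have sg1: "sg ?is (length js) = (1::'k)" by (simp add: sg_def)
    have M: "(\<Sum>r<c - 1. smult ((- 1) ^ (c - 2 - r)) (hbasis (merge_at (sum_list js + r) ns, js @ [c - 1])))
        = R"
    proof (cases "c = 2")
      case True
      show ?thesis
      proof (cases "js = []")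
        case False
        then show ?thesis using True False by (simp add: hbasis_def R_def)
      next
        case True
        then show ?thesis using \<open>c = 2\<close> by (simp add: hbasis_def R_def)
      qed
    next
      case False
      then show ?thesis using c by (simp add: hbasis_notlast R_def)
    qed
    have S: "(\<Sum>a\<in>{1..<c}. smult ((- 1) ^ (c - a)) (hbasis (ns, js @ [a, c - a])))
        = - (bv (ns, ?is) :: 'k F1)"
    proof -
      have "(\<Sum>a\<in>{1..<c}. smult ((- 1) ^ (c - a)) (hbasis (ns, js @ [a, c - a])))
          = (\<Sum>a\<in>{1..<c}. if a = c - 1 then - (bv (ns, ?is) :: 'k F1) else 0)"
      proof (rule sum.cong)
        fix a assume "a \<in> {1..<c}"
        then show "smult ((- 1) ^ (c - a)) (hbasis (ns, js @ [a, c - a])) = (if a = c - 1 then - (bv (ns, ?is) :: 'k F1) else 0)"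
          by (auto simp: hbasis_app2 smult_minus_left)
      qed simp
      also have "\<dots> = - bv (ns, ?is)" using c by (auto simp: sum.delta')
      finally show ?thesis .
    qed
    show ?thesis
      using M S by (simp add: hF_DT sg_def nth_append)
  qed
  have "dbasis (ns, ?is) = (\<Sum>j<length js. DT ns ?is j) + (DT ns ?is (length js) :: 'k F1)"
    by (simp add: dbasis_eq)
  then have "hF (dF (bv (ns, ?is) :: 'k F1)) = (\<Sum>j<length js. hF (DT ns ?is j)) + hF (DT ns ?is (length js))"
    by (simp only: dF_bv hF_add hF_sum)
  also have "\<dots> = hF (DT ns ?is (length js))" using z by simp
  finally show ?thesis
    unfolding NF_def R_def[symmetric] using last h0 p0 by simp
qed

lemma hbasis_app3: "hbasis (ns, L @ [x, y, b]) = (if b = 1 then bv (ns, L @ [x, y + 1]) else 0)"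
  by (simp add: hbasis_def butlast_append)

lemma hbasis_mid: "hbasis (ns, L @ x # y # M @ [a, b]) = (if b = 1 then bv (ns, L @ x # y # M @ [a + 1]) else 0)"
  by (simp add: hbasis_def butlast_append)

lemma B1:
  assumes a: "1 \<le> a" and j: "j < length ks"
  shows "hF (DT ns (ks @ [a, 1]) j) = - (DT ns (ks @ [a + 1]) j :: 'k::comm_ring_1 F1)"
proof -
  let ?is = "ks @ [a, 1]" and ?is' = "ks @ [a + 1]"
  have hM: "hbasis (merge_at (sum_list (take j ?is) + r) ns, ?is[j := ?is ! j - 1])
     = (bv (merge_at (sum_list (take j ?is') + r) ns, ?is'[j := ?is' ! j - 1]) :: 'k F1)" for r
    using j by (simp add: list_update_append1 nth_append hbasis_app2)
  have hS: "hbasis (ns, take j ?is @ [x, ?is ! j - x] @ drop (Suc j) ?is)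
     = (bv (ns, take j ?is' @ [x, ?is' ! j - x] @ drop (Suc j) ?is') :: 'k F1)" for x
    using j by (simp add: nth_append hbasis_mid)
  have ij: "?is ! j = ?is' ! j" using j by (simp add: nth_append)
  have sgs: "sg ?is j = - (sg ?is' j :: 'k)"
  proof -
    obtain a' where a': "a = Suc a'" using a by (cases a) auto
    have "Suc j - length ks = 0" using j by simp
    then show ?thesis using a' by (simp add: sg_def)
  qed
  show ?thesis
    unfolding hF_DT hM hS
    unfolding ij sgs DT_def MT_def ST_def smult_minus_left ..
qed

lemma B2: "hF (DT ns (ks @ [a, 1]) (Suc (length ks))) = (0 :: 'k::comm_ring_1 F1)"
  by (simp add: hF_DT nth_append)

lemma B3:
  assumes a: "1 \<le> a"
  shows "DT ns (ks @ [a + 1]) (length ks) + hF (DT ns (ks @ [a, 1]) (length ks))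
     = bv (merge_at (sum_list ks + a - 1) ns, ks @ [a]) - (bv (ns, ks @ [a, 1]) :: 'k::comm_ring_1 F1)"
proof -
  obtain a' where a': "a = Suc a'" using a by (cases a) auto
  define Mf :: "nat \<Rightarrow> 'k F1" where "Mf r = bv (merge_at (sum_list ks + r) ns, ks @ [Suc a'])" for r
  define Pf :: "nat \<Rightarrow> 'k F1" where "Pf x = bv (ns, ks @ [x, Suc (Suc a') - x])" for x
  have e1: "DT ns (ks @ [a + 1]) (length ks) = (\<Sum>r<Suc a'. smult ((-1) ^ (a' - r)) (Mf r))
      + (\<Sum>x\<in>{1..<Suc (Suc a')}. smult ((-1) ^ (Suc (Suc a') - x)) (Pf x))"
  proof -
    have "(\<Sum>r<Suc a'. MT ns (ks @ [a + 1]) (length ks) r) = (\<Sum>r<Suc a'. smult ((-1) ^ (a' - r)) (Mf r))"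
      by (rule sum.cong) (auto simp: MT_def Mf_def a' nth_append numeral_2_eq_2)
    moreover have "(\<Sum>x\<in>{1..<Suc (Suc a')}. ST ns (ks @ [a + 1]) (length ks) x) = (\<Sum>x\<in>{1..<Suc (Suc a')}. smult ((-1) ^ (Suc (Suc a') - x)) (Pf x))"
      by (rule sum.cong) (auto simp: ST_def Pf_def a' nth_append)
    ultimately show ?thesis by (simp add: DT_def sg_def a' nth_append)
  qed
  have e2: "hF (DT ns (ks @ [a, 1]) (length ks)) = (\<Sum>r<a'. smult ((-1) ^ (a' - 1 - r)) (Mf r))
      + (\<Sum>x\<in>{1..<Suc a'}. smult ((-1) ^ (Suc a' - x)) (Pf x))"
  proof -
    have "(\<Sum>r<a'. smult ((- 1) ^ (Suc a' - 2 - r)) (hbasis (merge_at (sum_list ks + r) ns, ks @ [a', 1])))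
        = (\<Sum>r<a'. smult ((-1) ^ (a' - 1 - r)) (Mf r) :: 'k F1)"
      by (rule sum.cong) (auto simp: Mf_def hbasis_app2 numeral_2_eq_2)
    moreover have "(\<Sum>x\<in>{1..<Suc a'}. smult ((- 1) ^ (Suc a' - x)) (hbasis (ns, ks @ [x, Suc a' - x, 1])))
        = (\<Sum>x\<in>{1..<Suc a'}. smult ((-1) ^ (Suc a' - x)) (Pf x) :: 'k F1)"
      by (rule sum.cong) (auto simp: Pf_def hbasis_app3 Suc_diff_le)
    ultimately show ?thesis by (simp add: hF_DT sg_def a' nth_append)
  qed
  have "DT ns (ks @ [a + 1]) (length ks) + hF (DT ns (ks @ [a, 1]) (length ks)) = Mf a' + - Pf (Suc a')"
    unfolding e1 e2 using sum_alt_merge[of a' Mf] sum_alt_split[of "Suc a'" Pf]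
    by (simp add: algebra_simps)
  then show ?thesis by (simp add: Mf_def Pf_def a')
qed

lemma NF_caseB:
  assumes a: "1 \<le> a"
  shows "NF (bv (ns, ks @ [a, 1]) :: 'k::comm_ring_1 F1) = bv (merge_at (sum_list ks + a - 1) ns, ks @ [a])
     - (if \<forall>i\<in>set (ks @ [a, 1]). i = 1 then bv ([sum_list ns], [1]) else 0)"
proof -
  let ?is = "ks @ [a, 1]" and ?is' = "ks @ [a + 1]"
  define P :: "'k F1" where "P = (if \<forall>i\<in>set ?is. i = 1 then bv ([sum_list ns], [1]) else 0)"
  have hP: "betaF (pF (bv (ns, ?is))) = (P :: 'k F1)"
    by (simp add: pbasis_def P_def)
  have hb: "hF (bv (ns, ?is)) = (bv (ns, ?is') :: 'k F1)" by (simp add: hbasis_app2)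
  have d1: "dbasis (ns, ?is') = (\<Sum>j<length ks. DT ns ?is' j) + (DT ns ?is' (length ks) :: 'k F1)"
    by (simp add: dbasis_eq)
  have d2: "dbasis (ns, ?is) = (\<Sum>j<length ks. DT ns ?is j) + DT ns ?is (length ks) + (DT ns ?is (Suc (length ks)) :: 'k F1)"
    by (simp add: dbasis_eq)
  have d2': "hF (dF (bv (ns, ?is) :: 'k F1)) = (\<Sum>j<length ks. hF (DT ns ?is j)) + hF (DT ns ?is (length ks))"
    unfolding dF_bv d2 by (simp only: hF_add hF_sum B2 add_0_right)
  have s0: "(\<Sum>j<length ks. hF (DT ns ?is j)) = - (\<Sum>j<length ks. DT ns ?is' j :: 'k F1)"
    unfolding sum_negf[symmetric] by (rule sum.cong) (use B1[OF a] in auto)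
  have "NF (bv (ns, ?is) :: 'k F1) = bv (ns, ?is) - P + dF (bv (ns, ?is')) + hF (dF (bv (ns, ?is)))"
    unfolding NF_def hP hb ..
  also have "\<dots> = bv (ns, ?is) - P + (DT ns ?is' (length ks) + hF (DT ns ?is (length ks)))"
    unfolding d2' unfolding dF_bv d1 s0 by (simp add: algebra_simps)
  also have "\<dots> = bv (merge_at (sum_list ks + a - 1) ns, ks @ [a]) - P"
    unfolding B3[OF a] by simp
  finally show ?thesis unfolding P_def .
qed

lemma NF_caseC: "NF (bv (ns, [1]) :: 'k::comm_ring_1 F1) = bv (ns, [1]) - bv ([sum_list ns], [1])"
proof -
  have "dbasis (ns, [1]) = (0 :: 'k F1)" by (simp add: dbasis_eq DT_def)
  moreover have "hbasis (ns, [1]) = (0 :: 'k F1)" by (simp add: hbasis_def)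
  ultimately show ?thesis by (simp add: NF_def pbasis_def)
qed

lemma merge_at_0 [simp]: "merge_at 0 (x # y # zs) = (x + y) # zs"
  by (simp add: merge_at_def)
lemma merge_at_Suc [simp]: "merge_at (Suc p) (x # xs) = x # merge_at p xs"
  by (simp add: merge_at_def)

lemma merge_induct_helper:
  "Suc p < length ns \<Longrightarrow> sum_list (merge_at p ns) = sum_list ns \<and> length (merge_at p ns) = length ns - 1
     \<and> (\<forall>x\<in>set (merge_at p ns). (\<forall>n\<in>set ns. 1 \<le> n) \<longrightarrow> 1 \<le> x)"
proof (induction p arbitrary: ns)
  case 0
  then obtain x y zs where "ns = x # y # zs" by (cases ns; cases "tl ns") auto
  then show ?case by auto
next
  case (Suc p)
  then obtain x xs where "ns = x # xs" by (cases ns) auto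
  then show ?case using Suc by auto
qed

lemma sum_merge: "Suc p < length ns \<Longrightarrow> sum_list (merge_at p ns) = sum_list ns"
  using merge_induct_helper by blast
lemma length_merge: "Suc p < length ns \<Longrightarrow> length (merge_at p ns) = length ns - 1"
  using merge_induct_helper by blast
lemma set_merge: "Suc p < length ns \<Longrightarrow> \<forall>n\<in>set ns. 1 \<le> n \<Longrightarrow> x \<in> set (merge_at p ns) \<Longrightarrow> 1 \<le> x"
  using merge_induct_helper by blast

lemma length_block [simp]: "length (block_sums ls ns) = length ns"
  by (induction ls ns rule: block_sums.induct) auto

lemma sum_block: "sum_list ns = length ls \<Longrightarrow> sum_list (block_sums ls ns) = sum_list ls"
proof (induction ls ns rule: block_sums.induct)
  case (1 ls) then show ?case by simp
next
  case (2 ls n ns)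
  then have "sum_list ns = length (drop n ls)" by simp
  then have "sum_list (block_sums (drop n ls) ns) = sum_list (drop n ls)" using 2 by simp
  then show ?case by (simp add: sum_list_append[symmetric])
qed

lemma block_merge:
  "Suc p < length ns \<Longrightarrow> sum_list ns = length ls \<Longrightarrow> block_sums ls (merge_at p ns) = merge_at p (block_sums ls ns)"
proof (induction p arbitrary: ns ls)
  case 0
  then obtain x y zs where ns: "ns = x # y # zs" by (cases ns; cases "tl ns") auto
  have "take (x + y) ls = take x ls @ take y (drop x ls)" by (simp add: take_add)
  then show ?case using ns by (simp add: add.commute drop_drop)
next
  case (Suc p)
  then obtain x xs where ns: "ns = x # xs" by (cases ns) auto
  then show ?case using Suc by simp
qed

lemma block_rep1: "block_sums ls (replicate (length ls) 1) = ls"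
  by (induction ls) simp_all

lemma merge_rep: "n = p + 2 \<Longrightarrow> merge_at p (replicate n (1::nat)) = replicate p 1 @ [2]"
  by (induction p arbitrary: n) (auto simp: numeral_2_eq_2)

lemma NF_add: "NF (x + y) = NF x + NF y"
  by (simp add: NF_def pF_def betaF_def dF_def hF_def lin_ext_add algebra_simps)
lemma NF_smult: "NF (smult c x) = smult c (NF x)"
  by (simp add: NF_def pF_def betaF_def dF_def hF_def lin_ext_smult smult_add smult_diff)
lemma NF_zero [simp]: "NF 0 = 0"
  using NF_smult[of 0 0] by simp
lemma NF_sum: "NF (sum f A) = (\<Sum>a\<in>A. NF (f a))"
  by (induction A rule: infinite_finite_induct) (simp_all add: NF_add)
lemma NF_expand: "NF x = (\<Sum>b\<in>Poly_Mapping.keys x. smult (Poly_Mapping.lookup x b) (NF (bv b)))"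
  by (subst expand_bv) (simp add: NF_sum NF_smult)

lemma lact_bv: "lact ls (bv b) = (if arity b = length ls then bv (block_sums ls (fst b), snd b) else 0)"
  by (simp add: lact_def)
lemma lact_diff: "lact ls (x - y) = lact ls x - lact ls y"
  by (simp add: lact_def lin_ext_diff)
lemma lact_zero [simp]: "lact ls 0 = 0"
  by (simp add: lact_def)
lemma lact_expand: "lact ls x = (\<Sum>b\<in>Poly_Mapping.keys x. smult (Poly_Mapping.lookup x b) (lact ls (bv b)))"
  by (subst expand_bv) (simp add: lact_def lin_ext_sum lin_ext_smult)

lemma NF_lact_bv:
  assumes v: "valid_basis (ns, is)" and ar: "sum_list ns = length ls"
  shows "NF (bv (block_sums ls ns, is)) = lact ls (NF (bv (ns, is)) :: 'k::comm_ring_1 F1)"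
proof -
  from v have ne: "is \<noteq> []" and pos: "\<forall>i\<in>set is. 1 \<le> i" and len: "length ns = sum_list is"
    by (auto simp: valid_basis_def)
  obtain js c where isd: "is = js @ [c]" using ne by (cases "is" rule: rev_exhaust) auto
  show ?thesis
  proof (cases "2 \<le> c")
    case True
    show ?thesis
    proof (cases "c = 2 \<and> js \<noteq> []")
      case True
      have "Suc (sum_list js) < length ns" using len isd True by simp
      then show ?thesis using True isd \<open>2 \<le> c\<close> ar
        by (simp add: NF_caseA lact_bv arity_def sum_merge block_merge)
    next
      case False
      then show ?thesis unfolding isd NF_caseA[OF \<open>2 \<le> c\<close>] if_not_P[OF False] by simp
    qed
  next
    case False
    with pos isd have c1: "c = 1" by auto
    show ?thesis
    proof (cases js rule: rev_exhaust)
      case Nil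
      with len isd c1 obtain m where ns: "ns = [m]" by (cases ns) auto
      then show ?thesis using isd c1 Nil ar by (simp add: NF_caseC NF_caseC[unfolded One_nat_def] lact_diff lact_bv arity_def)
    next
      case (snoc ks a)
      with pos isd have a: "1 \<le> a" by auto
      have isB: "is = ks @ [a, 1]" using isd snoc c1 by simp
      have lt: "Suc (sum_list ks + a - 1) < length ns" using len isB a by simp
      have "lact ls (NF (bv (ns, is)) :: 'k F1) = bv (block_sums ls (merge_at (sum_list ks + a - 1) ns), ks @ [a])
         - (if \<forall>i\<in>set (ks @ [a, 1]). i = 1 then bv ([sum_list ls], [1]) else 0)"
        unfolding isB NF_caseB[OF a] lact_diff
        using lt ar by (simp add: lact_bv arity_def sum_merge)
      then show ?thesis unfolding isB NF_caseB[OF a]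
        using lt ar by (simp add: block_merge sum_block)
    qed
  qed
qed

lemma filt_zero [simp]: "0 \<in> F1_filt q" by (simp add: F1_filt_def)
lemma filt_add: "x \<in> F1_filt q \<Longrightarrow> y \<in> F1_filt q \<Longrightarrow> x + y \<in> F1_filt q"
  using keys_add by (fastforce simp: F1_filt_def)
lemma filt_diff: "x \<in> F1_filt q \<Longrightarrow> y \<in> F1_filt q \<Longrightarrow> x - y \<in> F1_filt q"
  using keys_diff by (fastforce simp: F1_filt_def)
lemma filt_smult: "x \<in> F1_filt q \<Longrightarrow> smult c x \<in> F1_filt q"
  using keys_smult by (fastforce simp: F1_filt_def)
lemma filt_sum: "(\<And>a. a \<in> A \<Longrightarrow> f a \<in> F1_filt q) \<Longrightarrow> sum f A \<in> F1_filt q"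
  by (induction A rule: infinite_finite_induct) (simp_all add: filt_add)
lemma filt_bv: "valid_basis b \<Longrightarrow> length (snd b) \<le> q \<Longrightarrow> bv b \<in> F1_filt q"
  by (simp add: F1_filt_def bv_def)

lemma NF_filt_bv:
  assumes v: "valid_basis (ns, is)" and q: "length is \<le> q"
  shows "NF (bv (ns, is)) \<in> (F1_filt (q - 1) :: 'k::comm_ring_1 F1 set)"
proof -
  from v have ne: "is \<noteq> []" and pos: "\<forall>i\<in>set is. 1 \<le> i" and len: "length ns = sum_list is"
    and npos: "\<forall>n\<in>set ns. 1 \<le> n"
    by (auto simp: valid_basis_def)
  obtain js c where isd: "is = js @ [c]" using ne by (cases "is" rule: rev_exhaust) auto
  show ?thesis
  proof (cases "2 \<le> c")
    case True
    show ?thesis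
    proof (cases "c = 2 \<and> js \<noteq> []")
      case True
      have lt: "Suc (sum_list js) < length ns" using len isd True by simp
      obtain ys y where js: "js = ys @ [y]" using True by (cases js rule: rev_exhaust) auto
      have m1: "\<forall>x\<in>set (merge_at (sum_list js) ns). 1 \<le> x" using set_merge[OF lt npos] by blast
      have "valid_basis (merge_at (sum_list js) ns, butlast js @ [last js + 1])"
        unfolding valid_basis_def using lt npos pos isd True len m1 length_merge[OF lt]
        by (auto simp: js)
      then show ?thesis using True isd \<open>2 \<le> c\<close> q
        by (simp add: NF_caseA filt_bv)
    next
      case False
      then show ?thesis unfolding isd NF_caseA[OF \<open>2 \<le> c\<close>] if_not_P[OF False] by simp
    qed
  next
    case False
    with pos isd have c1: "c = 1" by auto
    show ?thesis
    proof (cases js rule: rev_exhaust)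
      case Nil
      with len isd c1 obtain m where ns: "ns = [m]" by (cases ns) auto
      then show ?thesis using isd c1 Nil by (simp add: NF_caseC NF_caseC[unfolded One_nat_def])
    next
      case (snoc ks a)
      with pos isd have a: "1 \<le> a" by auto
      have isB: "is = ks @ [a, 1]" using isd snoc c1 by simp
      have lt: "Suc (sum_list ks + a - 1) < length ns" using len isB a by simp
      have m1: "\<forall>x\<in>set (merge_at (sum_list ks + a - 1) ns). 1 \<le> x" using set_merge[OF lt npos] by blast
      have v1: "valid_basis (merge_at (sum_list ks + a - 1) ns, ks @ [a])"
        unfolding valid_basis_def using lt npos pos isB a len m1 length_merge[OF lt]
        by auto
      have "ns \<noteq> []" using lt by auto
      then have "1 \<le> sum_list ns" using npos
        by (cases ns) auto
      then have v2: "valid_basis ([sum_list ns], [1])" by (simp add: valid_basis_def)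
      show ?thesis unfolding isB NF_caseB[OF a]
        using v1 v2 q isB by (auto intro!: filt_diff filt_bv)
    qed
  qed
qed

lemma lact_sum: "lact ls (sum f A) = (\<Sum>a\<in>A. lact ls (f a))"
  by (simp add: lact_def lin_ext_sum)
lemma lact_smult: "lact ls (smult c x) = smult c (lact ls x)"
  by (simp add: lact_def lin_ext_smult)

lemma sum_rep1 [simp]: "sum_list (replicate n (1::nat)) = n"
  by (induction n) auto

lemma sum_rep1' [simp]: "sum_list (replicate n (Suc 0)) = n"
  by (induction n) auto

lemma lact_gen: assumes h: "length ls = sum_list is" shows "lact ls (gen is) = bv (ls, is)"
  unfolding gen_def lact_bv arity_def fst_conv snd_conv sum_rep1 h[symmetric] block_rep1 by simp

theorem main_part1:
  assumes "in_F1 x" "\<forall>b\<in>Poly_Mapping.keys x. arity b = length ls"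
  shows "NF (lact ls x) = lact ls (NF x :: 'k::comm_ring_1 F1)"
proof -
  have "lact ls x = (\<Sum>b\<in>Poly_Mapping.keys x. smult (Poly_Mapping.lookup x b) (bv (block_sums ls (fst b), snd b)))"
    by (subst lact_expand) (rule sum.cong, auto simp: lact_bv assms(2))
  then have "NF (lact ls x) = (\<Sum>b\<in>Poly_Mapping.keys x. smult (Poly_Mapping.lookup x b) (NF (bv (block_sums ls (fst b), snd b))))"
    by (simp add: NF_sum NF_smult)
  also have "\<dots> = (\<Sum>b\<in>Poly_Mapping.keys x. smult (Poly_Mapping.lookup x b) (lact ls (NF (bv b))))"
  proof (rule sum.cong)
    fix b assume b: "b \<in> Poly_Mapping.keys x"
    then have "valid_basis (fst b, snd b)" using assms(1) by (auto simp: in_F1_def)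
    moreover have "sum_list (fst b) = length ls" using assms(2) b by (simp add: arity_def)
    ultimately have "NF (bv (block_sums ls (fst b), snd b)) = lact ls (NF (bv (fst b, snd b)) :: 'k F1)"
      by (rule NF_lact_bv)
    then show "smult (Poly_Mapping.lookup x b) (NF (bv (block_sums ls (fst b), snd b))) = smult (Poly_Mapping.lookup x b) (lact ls (NF (bv b)))"
      by simp
  qed simp
  also have "\<dots> = lact ls (NF x)"
    by (subst (2) NF_expand) (simp add: lact_sum lact_smult)
  finally show ?thesis .
qed

theorem main_filt:
  assumes "1 \<le> q" "x \<in> (F1_filt q :: 'k::comm_ring_1 F1 set)"
  shows "NF x \<in> F1_filt (q - 1)"
proof -
  have "NF (bv b) \<in> (F1_filt (q - 1) :: 'k F1 set)" if "b \<in> Poly_Mapping.keys x" for b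
    using assms(2) that NF_filt_bv[of "fst b" "snd b" q] by (auto simp: F1_filt_def)
  then show ?thesis
    by (subst NF_expand) (auto intro!: filt_sum filt_smult)
qed

lemma gen_eq: "gen is = bv (replicate (sum_list is) 1, is)" by (simp add: gen_def)

lemma part2: "1 \<le> n \<Longrightarrow> NF (gen [n]) = (0 :: 'k::comm_ring_1 F1)"
proof (cases "n = 1")
  case True
  have "NF (bv ([1], [1]) :: 'k F1) = bv ([1], [1]) - bv ([sum_list [1::nat]], [1])" by (rule NF_caseC)
  then show ?thesis using True by (simp add: gen_eq)
next
  case False
  assume "1 \<le> n"
  with False have n2: "2 \<le> n" by simp
  have "NF (bv (replicate n 1, [] @ [n]) :: 'k F1) = 0" using NF_caseA[OF n2, of "replicate n 1" "[]"] by simp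
  then show ?thesis by (simp add: gen_eq)
qed

lemma part3: "1 < length is \<Longrightarrow> 2 < last is \<Longrightarrow> NF (gen is) = (0 :: 'k::comm_ring_1 F1)"
proof -
  assume l: "1 < length is" and c: "2 < last is"
  have e: "is = butlast is @ [last is]" using l by (cases "is" rule: rev_exhaust) auto
  have "NF (bv (replicate (sum_list is) 1, butlast is @ [last is]) :: 'k F1) = 0"
    using NF_caseA[of "last is" "replicate (sum_list is) 1" "butlast is"] c by simp
  then show ?thesis using e by (simp add: gen_eq)
qed

lemma part4: "js \<noteq> [] \<Longrightarrow> NF (gen (js @ [2])) =
   (lact (replicate (sum_list js) 1 @ [2]) (gen (butlast js @ [last js + 1])) :: 'k::comm_ring_1 F1)"
proof -
  assume ne: "js \<noteq> []"
  obtain ys y where js: "js = ys @ [y]" using ne by (cases js rule: rev_exhaust) auto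
  have "NF (gen (js @ [2])) = (bv (merge_at (sum_list js) (replicate (sum_list js + 2) 1), butlast js @ [last js + 1]) :: 'k F1)"
    using NF_caseA[of 2 "replicate (sum_list js + 2) 1" js] ne by (simp add: gen_eq)
  also have "\<dots> = bv (replicate (sum_list js) 1 @ [2], butlast js @ [last js + 1])"
    by (subst merge_rep[where p = "sum_list js"]) simp_all
  also have "\<dots> = lact (replicate (sum_list js) 1 @ [2]) (gen (butlast js @ [last js + 1]))"
    by (rule lact_gen[symmetric]) (simp add: js)
  finally show ?thesis .
qed

lemma part5: "1 < a \<Longrightarrow> NF (gen (js @ [a, 1])) =
   (lact (replicate (sum_list js + a - 1) 1 @ [2]) (gen (js @ [a])) :: 'k::comm_ring_1 F1)"
proof -
  assume a: "1 < a"
  have "NF (gen (js @ [a, 1])) = (bv (merge_at (sum_list js + a - 1) (replicate (sum_list js + a + 1) 1), js @ [a]) :: 'k F1)"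
    using NF_caseB[of a "replicate (sum_list js + a + 1) 1" js] a by (simp add: gen_eq)
  also have "\<dots> = bv (replicate (sum_list js + a - 1) 1 @ [2], js @ [a])"
    using a by (subst merge_rep[where p = "sum_list js + a - 1"]) simp_all
  also have "\<dots> = lact (replicate (sum_list js + a - 1) 1 @ [2]) (gen (js @ [a]))"
    by (rule lact_gen[symmetric]) (use a in simp)
  finally show ?thesis .
qed

lemma part6: "\<exists>i\<in>set js. i \<noteq> 1 \<Longrightarrow> NF (gen (js @ [1, 1])) =
   (lact (replicate (sum_list js) 1 @ [2]) (gen (js @ [1])) :: 'k::comm_ring_1 F1)"
proof -
  assume ex: "\<exists>i\<in>set js. i \<noteq> 1"
  have "NF (gen (js @ [1, 1])) = (bv (merge_at (sum_list js + 1 - 1) (replicate (sum_list js + 1 + 1) 1), js @ [1]) :: 'k F1)"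
  proof -
    have cond: "(\<forall>i\<in>set (js @ [1, 1]). i = (1::nat)) = False" using ex by auto
    show ?thesis unfolding gen_eq NF_caseB[OF le_refl] cond if_False by simp
  qed
  also have "\<dots> = bv (replicate (sum_list js) 1 @ [2], js @ [1])"
    by (subst merge_rep[where p = "sum_list js + 1 - 1"]) simp_all
  also have "\<dots> = lact (replicate (sum_list js) 1 @ [2]) (gen (js @ [1]))"
    by (rule lact_gen[symmetric]) simp
  finally show ?thesis .
qed

lemma part7: "2 \<le> k \<Longrightarrow> NF (gen (replicate k 1)) =
   (lact (replicate (k - 2) 1 @ [2]) (gen (replicate (k - 1) 1)) - bv ([k], [1]) :: 'k::comm_ring_1 F1)"
proof -
  assume k: "2 \<le> k"
  obtain m where km: "k = m + 2" using k by (metis le_add_diff_inverse2)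
  have rk: "replicate k (1::nat) = replicate (k - 2) 1 @ [1, 1]"
    unfolding km replicate_add by (simp add: numeral_2_eq_2)
  have rk1: "replicate (k - 1) (1::nat) = replicate (k - 2) 1 @ [1]"
    unfolding km by (simp add: replicate_append_same)
  have g: "gen (replicate k 1) = (bv (replicate k 1, replicate (k - 2) 1 @ [1, 1]) :: 'k F1)"
    unfolding gen_def sum_rep1 by (subst (2) rk) (rule refl)
  have cond: "(\<forall>i\<in>set (replicate (k - 2) 1 @ [1, 1]). i = (1::nat)) = True" by simp
  have "NF (gen (replicate k 1)) = bv (merge_at (sum_list (replicate (k - 2) (1::nat)) + 1 - 1) (replicate k 1), replicate (k - 2) 1 @ [1])
      - (bv ([sum_list (replicate k (1::nat))], [1]) :: 'k F1)"
    unfolding g NF_caseB[OF le_refl] cond if_True ..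
  also have "\<dots> = bv (replicate (k - 2) 1 @ [2], replicate (k - 1) 1) - bv ([k], [1])"
    unfolding sum_rep1 rk1[symmetric] add_diff_cancel_right' using k by (subst merge_rep) simp_all
  also have "bv (replicate (k - 2) 1 @ [2], replicate (k - 1) 1) = lact (replicate (k - 2) 1 @ [2]) (gen (replicate (k - 1) (1::nat)))"
    by (rule lact_gen[symmetric]) (use k in simp)
  finally show ?thesis .
qed


theorem mainTheorem6:
  shows "(\<forall>ls (x :: 'k::comm_ring_1 F1). (\<forall>l\<in>set ls. 1 \<le> l) \<and> in_F1 x
            \<and> (\<forall>b\<in>Poly_Mapping.keys x. arity b = length ls) \<longrightarrow> NF (lact ls x) = lact ls (NF x))
    \<and> (\<forall>n\<ge>1. NF (gen [n]) = (0 :: 'k F1))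
    \<and> (\<forall>is. (\<forall>i\<in>set is. 1 \<le> i) \<and> 1 < length is \<and> 2 < last is
            \<longrightarrow> NF (gen is) = (0 :: 'k F1))
    \<and> (\<forall>js. js \<noteq> [] \<and> (\<forall>i\<in>set js. 1 \<le> i) \<longrightarrow>
            NF (gen (js @ [2])) =
              (lact (replicate (sum_list js) 1 @ [2]) (gen (butlast js @ [last js + 1])) :: 'k F1))
    \<and> (\<forall>js a. (\<forall>i\<in>set js. 1 \<le> i) \<and> 1 < a \<longrightarrow>
            NF (gen (js @ [a, 1])) =
              (lact (replicate (sum_list js + a - 1) 1 @ [2]) (gen (js @ [a])) :: 'k F1))
    \<and> (\<forall>js. (\<forall>i\<in>set js. 1 \<le> i) \<and> (\<exists>i\<in>set js. i \<noteq> 1) \<longrightarrow>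
            NF (gen (js @ [1, 1])) =
              (lact (replicate (sum_list js) 1 @ [2]) (gen (js @ [1])) :: 'k F1))
    \<and> (\<forall>k\<ge>2. NF (gen (replicate k 1)) =
              (lact (replicate (k - 2) 1 @ [2]) (gen (replicate (k - 1) 1)) - bv ([k], [1]) :: 'k F1))
    \<and> (\<forall>q\<ge>1. \<forall>x\<in>(F1_filt q :: 'k F1 set). NF x \<in> F1_filt (q - 1))"
  proof (intro conjI)
  show "\<forall>ls (x :: 'k::comm_ring_1 F1). (\<forall>l\<in>set ls. 1 \<le> l) \<and> in_F1 x
            \<and> (\<forall>b\<in>Poly_Mapping.keys x. arity b = length ls) \<longrightarrow> NF (lact ls x) = lact ls (NF x)"
    using main_part1 by blast
qed (use part2 part3 part4 part5 part6 part7 main_filt in blast)+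

end
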